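(* Let $k\ge3$ be odd and $\ell\ge5$ be odd. There exists $m_0=m_0(k,\ell)$ such that for every $m\ge m_0$ the graph $H_m$ is $(C_k,C_\ell)$-Ramsey.
   Context: $H_m$ is the graph on pairwise disjoint vertex sets $V_1,\dots,V_5$, each of size $m$, whose edges are: a perfect matching between $V_1$ and $V_2$, a perfect matching between $V_3$ and $V_4$, and all possible edges between $V_i$ and $V_j$ for every other pair $\{i,j\}$ of distinct indices (there are no edges inside any $V_i$). A graph $G$ is $(H_1,H_2)$-Ramsey if every red/blue colouring of its edges contains a red copy of $H_1$ or a blue copy of $H_2$. $C_m$ is the cycle of length $m$. *)

theory Defs
  imports Main
begin

definition has_copy :: "'b set \<Rightarrow> 'b set set \<Rightarrow> 'a set set \<Rightarrow> ('a set \<Rightarrow> bool) \<Rightarrow> bool" where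
  "has_copy V1 E1 E col \<longleftrightarrow>
     (\<exists>f. inj_on f V1 \<and> (\<forall>e\<in>E1. f ` e \<in> E \<and> col (f ` e)))"

(* (H1,H2)-Ramsey: every red/blue colouring (red = True) of the edges has a red copy of H1
   or a blue copy of H2. *)
definition ramsey_graph ::
  "'a set set \<Rightarrow> 'b set \<Rightarrow> 'b set set \<Rightarrow> 'c set \<Rightarrow> 'c set set \<Rightarrow> bool" where
  "ramsey_graph E V1 E1 V2 E2 \<longleftrightarrow>
     (\<forall>c :: 'a set \<Rightarrow> bool. has_copy V1 E1 E c \<or> has_copy V2 E2 E (\<lambda>e. \<not> c e))"

definition cycle_V :: "nat \<Rightarrow> nat set" where
  "cycle_V n = {..<n}"

definition cycle_E :: "nat \<Rightarrow> nat set set" where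
  "cycle_E n = {{i, Suc i mod n} | i. i < n}"

(* H_m: vertices (i,a) with i \<in> {1..5} (the part V_i) and a < m.
   The perfect matchings between V_1,V_2 and between V_3,V_4 are taken to be
   (1,a)-(2,a) and (3,a)-(4,a) (any perfect matching gives an isomorphic graph). *)
definition H_V :: "nat \<Rightarrow> (nat \<times> nat) set" where
  "H_V m = {1..5} \<times> {..<m}"

definition H_E :: "nat \<Rightarrow> (nat \<times> nat) set set" where
  "H_E m = {{(i, a), (j, b)} | i j a b.
      i \<in> {1..5} \<and> j \<in> {1..5} \<and> a < m \<and> b < m \<and> i \<noteq> j \<and>
      (if {i, j} = {1, 2} \<or> {i, j} = {3, 4} then a = b else True)}"

end

theory Submission
  imports Defs "HOL-Library.Ramsey"
begin


definition grp :: "nat \<Rightarrow> nat" where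
  "grp p = (if p \<le> 2 then 0 else if p \<le> 4 then 1 else 2)"

definition rc :: "(nat \<times> nat \<Rightarrow> bool) \<Rightarrow> bool \<Rightarrow> bool \<Rightarrow> nat \<Rightarrow> nat \<Rightarrow> bool" where
  "rc C M12 M34 p q = (if grp p < grp q then C (p,q) else if grp q < grp p then C (q,p)
      else if grp p = 0 then M12 else M34)"

definition cyc_col :: "(nat \<Rightarrow> nat \<Rightarrow> bool) \<Rightarrow> bool \<Rightarrow> nat list \<Rightarrow> bool" where
  "cyc_col R col w = list_all (\<lambda>(a,b). R a b = col) (zip w (tl w @ [hd w]))"

definition tris :: "nat list list" where
  "tris = [[1, 3, 2], [1, 4, 2], [1, 5, 2], [1, 3, 4], [1, 3, 5], [1, 4, 5], [2, 3, 4], [2, 3, 5], [2, 4, 5], [3, 5, 4]]"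
definition pents :: "nat list list" where
  "pents = [[2, 3, 4, 5, 1], [2, 3, 5, 4, 1], [2, 4, 3, 5, 1], [2, 4, 5, 3, 1], [2, 5, 3, 4, 1], [2, 5, 4, 3, 1], [1, 3, 2, 4, 5], [1, 3, 2, 5, 4], [1, 3, 4, 2, 5], [1, 3, 5, 2, 4], [1, 4, 2, 3, 5], [1, 4, 3, 2, 5]]"

lemma grp_simps: "grp 1 = 0" "grp 2 = 0" "grp 3 = 1" "grp 4 = 1" "grp 5 = 2"
  by (simp_all add: grp_def)

lemma finite_case:
  "(\<exists>w\<in>set tris. cyc_col (rc C M12 M34) True w) \<or> (\<exists>w\<in>set tris. cyc_col (rc C M12 M34) False w)
   \<or> (\<exists>w\<in>set pents. cyc_col (rc C M12 M34) False w)"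
  apply (simp add: tris_def pents_def cyc_col_def rc_def grp_def)
  apply (cases "C(1,3)"; cases "C(1,4)"; cases "C(2,3)"; cases "C(2,4)"; cases "C(1,5)"; cases "C(2,5)")
  apply simp_all
  apply blast+
  done

lemma lists_ok:
  "\<forall>w\<in>set tris \<union> set pents. distinct w \<and> set w \<subseteq> {1..5} \<and> length w \<ge> 3 \<and> grp (w!0) \<noteq> grp (w!1)"
  by (simp add: tris_def pents_def grp_def)



lemma cyc_col_nth:
  assumes "cyc_col R col w" "w \<noteq> []" "i < length w"
  shows "R (w!i) (w!(Suc i mod length w)) = col"
proof -
  have len: "length (tl w @ [hd w]) = length w" using assms(2) by simp
  have "(\<lambda>(a,b). R a b = col) (zip w (tl w @ [hd w]) ! i)"
    using assms(1) assms(3) len unfolding cyc_col_def list_all_length by simp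
  hence *: "R (w!i) ((tl w @ [hd w]) ! i) = col" using assms(3) len by simp
  show ?thesis
  proof (cases "Suc i < length w")
    case True
    then have "(tl w @ [hd w]) ! i = w ! Suc i" by (simp add: nth_append nth_tl less_diff_conv)
    then show ?thesis using * True by simp
  next
    case False
    then have "i = length w - 1" using assms(3) by simp
    then have "(tl w @ [hd w]) ! i = w ! 0" using assms(2) by (simp add: nth_append hd_conv_nth)
    moreover have "Suc i = length w" using False assms(3) by simp
    then have "Suc i mod length w = 0" by simp
    ultimately show ?thesis using * by simp
  qed
qed

lemma has_copy_cycle:
  assumes "inj_on g {..<n}"
    and "\<And>i. i < n \<Longrightarrow> {g i, g (Suc i mod n)} \<in> E \<and> P {g i, g (Suc i mod n)}"
  shows "has_copy (cycle_V n) (cycle_E n) E P"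
  unfolding has_copy_def cycle_V_def
proof (intro exI conjI ballI)
  show "inj_on g {..<n}" by fact
next
  fix e assume "e \<in> cycle_E n"
  then obtain i where i: "i < n" "e = {i, Suc i mod n}" unfolding cycle_E_def by blast
  then have "g ` e = {g i, g (Suc i mod n)}" by simp
  then show "g ` e \<in> E" "P (g ` e)" using assms(2)[OF i(1)] by simp_all
qed

lemma bounce:
  fixes phi :: "nat \<times> nat \<Rightarrow> 'v"
  assumes F1: "\<And>p q r s. p \<in> {1..5} \<Longrightarrow> q \<in> {1..5} \<Longrightarrow> p \<noteq> q \<Longrightarrow> r < T \<Longrightarrow> s < T \<Longrightarrow>
        grp p \<noteq> grp q \<or> r = s \<Longrightarrow> {phi (p,r), phi (q,s)} \<in> E \<and> c {phi (p,r), phi (q,s)} = R p q"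
    and F2: "inj_on phi ({1..5} \<times> {..<T})"
    and sym: "\<And>p q. R p q = R q p"
    and w: "distinct w" "set w \<subseteq> {1..5}" "length w \<ge> 2" "grp (w!0) \<noteq> grp (w!1)" "cyc_col R col w"
    and n: "n = 2*j + length w" "j < T"
  shows "has_copy (cycle_V n) (cycle_E n) E (\<lambda>e. c e = col)"
proof -
  define L where "L = length w"
  define part where "part i = (if i < 2*j+1 then (if even i then w!0 else w!1) else w!(i-2*j))" for i
  define idx where "idx i = (if i < 2*j+1 then (if even i then i div 2 else (i+1) div 2) else 0)" for i
  define g where "g i = phi (part i, idx i)" for i
  have wne: "w \<noteq> []" using w(3) by auto
  have inw: "\<And>t. t < L \<Longrightarrow> w!t \<in> {1..5}" using w(2) unfolding L_def by (meson nth_mem subsetD)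
  have wd: "\<And>t t'. t < L \<Longrightarrow> t' < L \<Longrightarrow> w!t = w!t' \<longleftrightarrow> t = t'"
    using w(1) unfolding L_def by (simp add: nth_eq_iff_index_eq)
  have xy: "R (w!0) (w!1) = col"
    using cyc_col_nth[OF w(5) wne, of 0] w(3) wne by simp
  have a: "part i \<in> {1..5} \<and> idx i < T" if "i < n" for i
  proof -
    have "w!0 \<in> {1..5}" "w!1 \<in> {1..5}" using inw[of 0] inw[of 1] w(3) wne L_def by auto
    then have "part i \<in> {1..5}" using that w(3) inw n(1) unfolding part_def L_def by auto
    moreover have "idx i < T" using that n(2) unfolding idx_def by (auto elim!: oddE)
    ultimately show ?thesis by simp
  qed
  have mixed: False if ab: "a < 2*j+1" "\<not> b < 2*j+1" "b < n" "(part a, idx a) = (part b, idx b)" for a b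
  proof -
    define t where "t = b - 2*j"
    have t: "1 \<le> t" "t < L" using ab n(1) L_def t_def by auto
    have pb: "part b = w!t" "idx b = 0" using ab(2) unfolding part_def idx_def t_def by auto
    show False
    proof (cases "even a")
      case True
      then have "part a = w!0" using ab(1) unfolding part_def by simp
      then have "w!t = w!0" using pb ab(4) by simp
      then have "t = 0" using wd[of t 0] t by simp
      then show False using t by simp
    next
      case False
      then have "idx a = (a+1) div 2" using ab(1) unfolding idx_def by simp
      moreover have "(a+1) div 2 \<ge> 1" using False by (auto elim!: oddE)
      ultimately show False using pb ab(4) by simp
    qed
  qed
  have b: "inj_on (\<lambda>i. (part i, idx i)) {..<n}"
  proof (rule inj_onI)
    fix i i' assume i: "i \<in> {..<n}" and i': "i' \<in> {..<n}" and eq: "(part i, idx i) = (part i', idx i')"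
    have x_ne_y: "w!0 \<noteq> w!1" using wd[of 0 1] w(3) wne L_def by auto
    show "i = i'"
    proof (cases "i < 2*j+1")
      case True
      show ?thesis
      proof (cases "i' < 2*j+1")
        case True
        then show ?thesis using \<open>i < 2*j+1\<close> eq x_ne_y unfolding part_def idx_def
          by (auto split: if_splits) presburger+
      next
        case False
        then show ?thesis using mixed[of i i'] True i' eq by auto
      qed
    next
      case False
      show ?thesis
      proof (cases "i' < 2*j+1")
        case True
        then show ?thesis using mixed[of i' i] False i eq by auto
      next
        case False
        then have "i - 2*j = i' - 2*j" using \<open>\<not> i < 2*j+1\<close> eq wd[of "i-2*j" "i'-2*j"] i i' n(1) L_def
          unfolding part_def by auto
        then show ?thesis using False \<open>\<not> i < 2*j+1\<close> by linarith
      qed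
    qed
  qed
  have c: "part i \<noteq> part (Suc i mod n) \<and> (grp (part i) \<noteq> grp (part (Suc i mod n)) \<or> idx i = idx (Suc i mod n))
      \<and> R (part i) (part (Suc i mod n)) = col" if i: "i < n" for i
  proof -
    have x_ne_y: "w!0 \<noteq> w!1" using wd[of 0 1] w(3) wne L_def by auto
    show ?thesis
    proof (cases "i < 2*j+1")
      case True
      then have s: "Suc i mod n = Suc i" using n(1) w(3) by auto
      have ps: "part (Suc i) = (if even i then w!1 else w!0)"
      proof (cases "Suc i < 2*j+1")
        case True then show ?thesis unfolding part_def by auto
      next
        case False
        then have "Suc i = 2*j+1" using \<open>i < 2*j+1\<close> by simp
        then show ?thesis unfolding part_def by auto
      qed
      have "{part i, part (Suc i)} = {w!0, w!1}"
        using True ps unfolding part_def by auto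
      then show ?thesis using s xy sym x_ne_y w(4) by (auto simp: doubleton_eq_iff)
    next
      case False
      define t where "t = i - 2*j"
      have t: "1 \<le> t" "t < L" using False i n(1) L_def t_def by auto
      have pi: "part i = w!t" "idx i = 0" using False unfolding part_def idx_def t_def by auto
      have ct: "R (w!t) (w!(Suc t mod L)) = col" using cyc_col_nth[OF w(5) wne, of t] t L_def by simp
      show ?thesis
      proof (cases "Suc i < n")
        case True
        then have "Suc i mod n = Suc i" by simp
        moreover have "part (Suc i) = w!(Suc t)" "idx (Suc i) = 0" "Suc t mod L = Suc t"
          using False True n(1) L_def t_def unfolding part_def idx_def by (auto simp: Suc_diff_le)
        moreover have "w!t \<noteq> w!(Suc t)" using wd[of t "Suc t"] True False n(1) L_def t_def by auto
        ultimately show ?thesis using pi ct by simp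
      next
        case False
        then have "Suc i = n" using i by simp
        then have "Suc i mod n = 0" by simp
        moreover have "part 0 = w!0" "idx 0 = 0" unfolding part_def idx_def by auto
        moreover have "Suc t = L" using \<open>Suc i = n\<close> n(1) L_def t_def t(1) by linarith
        then have "Suc t mod L = 0" by simp
        moreover have "w!t \<noteq> w!0" using wd[of t 0] t by auto
        ultimately show ?thesis using pi ct by simp
      qed
    qed
  qed
  show ?thesis
  proof (rule has_copy_cycle)
    show "inj_on g {..<n}"
      unfolding g_def
    proof (rule comp_inj_on[OF b, unfolded comp_def])
      show "inj_on phi ((\<lambda>i. (part i, idx i)) ` {..<n})"
        by (rule inj_on_subset[OF F2]) (use a in auto)
    qed
  next
    fix i assume i: "i < n"
    have i2: "Suc i mod n < n" using i by simp
    show "{g i, g (Suc i mod n)} \<in> E \<and> c {g i, g (Suc i mod n)} = col"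
    proof -
      have "{phi (part i, idx i), phi (part (Suc i mod n), idx (Suc i mod n))} \<in> E \<and>
            c {phi (part i, idx i), phi (part (Suc i mod n), idx (Suc i mod n))} = R (part i) (part (Suc i mod n))"
        apply (rule F1)
        using a[OF i] a[OF i2] c[OF i] by blast+
      then show ?thesis unfolding g_def using c[OF i] by simp
    qed
  qed
qed



lemma tris_ok: "w \<in> set tris \<Longrightarrow> distinct w \<and> set w \<subseteq> {1..5} \<and> length w = 3 \<and> grp (w!0) \<noteq> grp (w!1)"
  by (auto simp: tris_def grp_def)
lemma pents_ok: "w \<in> set pents \<Longrightarrow> distinct w \<and> set w \<subseteq> {1..5} \<and> length w = 5 \<and> grp (w!0) \<noteq> grp (w!1)"
  by (auto simp: pents_def grp_def)

lemma rc_sym: "rc C a b p q = rc C a b q p"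
  by (auto simp: rc_def)

lemma HE_mem:
  assumes "p \<in> {1..5}" "q \<in> {1..5}" "a < m" "b < m" "p \<noteq> q"
    "({p,q} = {1,2} \<or> {p,q} = {3,4}) \<longrightarrow> a = b"
  shows "{(p,a),(q,b)} \<in> H_E m"
  unfolding H_E_def
  apply (rule CollectI)
  apply (rule exI[of _ p], rule exI[of _ q], rule exI[of _ a], rule exI[of _ b])
  using assms by auto

lemma grp_eq_cases:
  assumes "p \<in> {1..5}" "q \<in> {1..5}" "p \<noteq> q" "grp p = grp q"
  shows "(p=1 \<and> q=2) \<or> (p=2 \<and> q=1) \<or> (p=3 \<and> q=4) \<or> (p=4 \<and> q=3)"
proof -
  have "p \<in> {1,2,3,4,5}" "q \<in> {1,2,3,4,5}" using assms(1,2) by auto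
  then show ?thesis using assms(3,4) by (auto simp: grp_def)
qed

lemma grp_neq_match:
  assumes "grp p \<noteq> grp q"
  shows "\<not> ({p,q} = {1,2} \<or> {p,q} = {3,4})"
  using assms by (auto simp: doubleton_eq_iff grp_def)

lemma grp_le: "p \<in> {1..5} \<Longrightarrow> grp p \<le> 2"
  by (auto simp: grp_def)

lemma ramsey_fin:
  assumes "finite (S :: 'c set)"
  shows "\<exists>N::nat. \<forall>g. (\<forall>X. g X \<in> S) \<longrightarrow>
     (\<exists>H. H \<subseteq> {..<N} \<and> finite H \<and> card H = q \<and> (\<forall>X\<in>[H]\<^bsup>2\<^esup>. \<forall>Y\<in>[H]\<^bsup>2\<^esup>. g X = g Y))"
proof -
  obtain h where h: "bij_betw h S {0..<card S}" using ex_bij_betw_finite_nat[OF assms] by blast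
  obtain N :: nat where N: "partn_lst {..<N} (replicate (card S) q) 2" using ramsey_full[of "replicate (card S) q" 2] by blast
  show ?thesis
  proof (rule exI[of _ N], intro allI impI)
    fix g :: "nat set \<Rightarrow> 'c" assume g: "\<forall>X. g X \<in> S"
    have f: "(h \<circ> g) \<in> [{..<N}]\<^bsup>2\<^esup> \<rightarrow> {..<card S}"
      using g h by (auto simp: bij_betw_def)
    obtain i H where i: "i < length (replicate (card S) q)" and H: "H \<in> [{..<N}]\<^bsup>(replicate (card S) q ! i)\<^esup>"
      and hom: "(h \<circ> g) ` [H]\<^bsup>2\<^esup> \<subseteq> {i}"
      using partn_lstE[OF N f] by auto
    have Hq: "H \<subseteq> {..<N}" "finite H" "card H = q" using H i by (auto simp: nsets_def)
    have "\<forall>X\<in>[H]\<^bsup>2\<^esup>. \<forall>Y\<in>[H]\<^bsup>2\<^esup>. g X = g Y"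
    proof (intro ballI)
      fix X Y assume X: "X \<in> [H]\<^bsup>2\<^esup>" and Y: "Y \<in> [H]\<^bsup>2\<^esup>"
      have "h (g X) = h (g Y)" using hom X Y by auto
      then show "g X = g Y" using h g unfolding bij_betw_def inj_on_def by blast
    qed
    then show "\<exists>H. H \<subseteq> {..<N} \<and> finite H \<and> card H = q \<and> (\<forall>X\<in>[H]\<^bsup>2\<^esup>. \<forall>Y\<in>[H]\<^bsup>2\<^esup>. g X = g Y)"
      using Hq by blast
  qed
qed



theorem lemma3p3:
  fixes k l :: nat
  assumes "odd k" "k \<ge> 3" "odd l" "l \<ge> 5"
  shows "\<exists>m0. \<forall>m\<ge>m0.
           ramsey_graph (H_E m) (cycle_V k) (cycle_E k) (cycle_V l) (cycle_E l)"
proof -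
  define T where "T = k + l"
  define P where "P = {1..5::nat} \<times> {1..5::nat}"
  define S :: "((nat \<times> nat \<Rightarrow> bool) \<times> bool \<times> bool) set"
    where "S = ((\<lambda>A pq. pq \<in> A) ` Pow P) \<times> UNIV"
  have finS: "finite S" unfolding S_def P_def by simp
  obtain N :: nat where N: "\<And>g :: nat set \<Rightarrow> _. (\<forall>X. g X \<in> S) \<Longrightarrow>
     (\<exists>H. H \<subseteq> {..<N} \<and> finite H \<and> card H = 3*T \<and> (\<forall>X\<in>[H]\<^bsup>2\<^esup>. \<forall>Y\<in>[H]\<^bsup>2\<^esup>. g X = g Y))"
    using ramsey_fin[OF finS, of "3*T"] by blast
  show ?thesis
  proof (intro exI allI impI)
    fix m :: nat assume mN: "N \<le> m"
    show "ramsey_graph (H_E m) (cycle_V k) (cycle_E k) (cycle_V l) (cycle_E l)"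
      unfolding ramsey_graph_def
    proof
      fix c :: "(nat \<times> nat) set \<Rightarrow> bool"
      define g where "g X = ((\<lambda>pq. pq \<in> P \<and> c {(fst pq, Min X), (snd pq, Max X)}),
          c {(1, Min X), (2, Min X)}, c {(3, Min X), (4, Min X)})" for X :: "nat set"
      have gS: "\<forall>X. g X \<in> S"
      proof
        fix X
        have "(\<lambda>pq. pq \<in> P \<and> c {(fst pq, Min X), (snd pq, Max X)})
              = (\<lambda>pq. pq \<in> {pq \<in> P. c {(fst pq, Min X), (snd pq, Max X)}})" by simp
        moreover have "{pq \<in> P. c {(fst pq, Min X), (snd pq, Max X)}} \<in> Pow P" by auto
        ultimately have "(\<lambda>pq. pq \<in> P \<and> c {(fst pq, Min X), (snd pq, Max X)}) \<in> (\<lambda>A pq. pq \<in> A) ` Pow P"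
          by (rule image_eqI)
        then show "g X \<in> S" unfolding g_def S_def by auto
      qed
      obtain H where H: "H \<subseteq> {..<N}" "finite H" "card H = 3*T"
        and hom: "\<forall>X\<in>[H]\<^bsup>2\<^esup>. \<forall>Y\<in>[H]\<^bsup>2\<^esup>. g X = g Y"
        using N[OF gS] by blast
      define xs where "xs = sorted_list_of_set H"
      have len: "length xs = 3*T" using H unfolding xs_def by simp
      have setxs: "set xs = H" using H unfolding xs_def by simp
      have dxs: "distinct xs" unfolding xs_def by simp
      have sxs: "sorted_wrt (<) xs" unfolding xs_def by simp
      have mono: "\<And>i j. i < j \<Longrightarrow> j < 3*T \<Longrightarrow> xs!i < xs!j"
        using sxs len by (simp add: sorted_wrt_nth_less)
      have inH: "\<And>i. i < 3*T \<Longrightarrow> xs!i \<in> H" using setxs len by (metis nth_mem)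
      have ltm: "\<And>i. i < 3*T \<Longrightarrow> xs!i < m" using inH H(1) mN by fastforce
      have T1: "T \<ge> 1" using assms unfolding T_def by simp
      define a0 where "a0 = xs!0"
      define b0 where "b0 = xs!1"
      have ab0: "a0 < b0" "a0 \<in> H" "b0 \<in> H" using mono[of 0 1] inH[of 0] inH[of 1] T1
        unfolding a0_def b0_def by auto
      define C where "C pq = c {(fst pq, a0), (snd pq, b0)}" for pq
      define M12 where "M12 = c {(1, a0), (2, a0)}"
      define M34 where "M34 = c {(3, a0), (4, a0)}"
      have homuse: "c {(p,a),(q,b)} = C (p,q) \<and> c {(1,a),(2,a)} = M12 \<and> c {(3,a),(4,a)} = M34"
        if ab: "a < b" "a \<in> H" "b \<in> H" and pq: "p \<in> {1..5}" "q \<in> {1..5}" for a b p q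
      proof -
        have "{a,b} \<in> [H]\<^bsup>2\<^esup>" "{a0,b0} \<in> [H]\<^bsup>2\<^esup>" using ab ab0 by auto
        then have e: "g {a,b} = g {a0,b0}" using hom by blast
        have mm: "Min {a,b} = a" "Max {a,b} = b" "Min {a0,b0} = a0" "Max {a0,b0} = b0"
          using ab ab0 by auto
        have "(p,q) \<in> P" using pq unfolding P_def by auto
        have e1: "fst (g {a,b}) (p,q) = fst (g {a0,b0}) (p,q)" using e by simp
        have e2: "fst (snd (g {a,b})) = fst (snd (g {a0,b0}))" using e by simp
        have e3: "snd (snd (g {a,b})) = snd (snd (g {a0,b0}))" using e by simp
        have "c {(p,a),(q,b)} = C (p,q)" using e1 \<open>(p,q) \<in> P\<close> unfolding g_def mm C_def by simp
        moreover have "c {(1,a),(2,a)} = M12" using e2 unfolding g_def mm M12_def by simp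
        moreover have "c {(3,a),(4,a)} = M34" using e3 unfolding g_def mm M34_def by simp
        ultimately show ?thesis by simp
      qed
      define phi where "phi pr = (fst pr, xs ! (grp (fst pr) * T + snd pr))" for pr
      have pos_lt: "grp p * T + r < 3*T" if "p \<in> {1..5}" "r < T" for p r
      proof -
        have "grp p \<le> 2" using grp_le[OF that(1)] .
        then have "grp p * T \<le> 2 * T" by simp
        then show ?thesis using that(2) by linarith
      qed
      have F1: "{phi (p,r), phi (q,s)} \<in> H_E m \<and> c {phi (p,r), phi (q,s)} = rc C M12 M34 p q"
        if pq: "p \<in> {1..5}" "q \<in> {1..5}" "p \<noteq> q" "r < T" "s < T" "grp p \<noteq> grp q \<or> r = s" for p q r s
      proof -
        define a where "a = xs ! (grp p * T + r)"
        define b where "b = xs ! (grp q * T + s)"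
        have ph: "phi (p,r) = (p,a)" "phi (q,s) = (q,b)" unfolding phi_def a_def b_def by auto
        have am: "a < m" "b < m" "a \<in> H" "b \<in> H" unfolding a_def b_def
          using ltm inH pos_lt pq by auto
        consider (lt) "grp p < grp q" | (gt) "grp q < grp p" | (eq) "grp p = grp q" by linarith
        then show ?thesis
        proof cases
          case lt
          have "grp p * T + r < grp q * T + s"
          proof -
            have "(grp p + 1) * T \<le> grp q * T" using lt by (intro mult_right_mono) auto
            then show ?thesis using pq(4) by (simp add: algebra_simps)
          qed
          then have "a < b" unfolding a_def b_def using mono pos_lt pq by auto
          then have "c {(p,a),(q,b)} = C (p,q)" using homuse am pq by blast
          moreover have "rc C M12 M34 p q = C (p,q)" using lt by (simp add: rc_def)
          moreover have "{(p,a),(q,b)} \<in> H_E m"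
            using HE_mem[OF pq(1,2) am(1,2) pq(3)] grp_neq_match lt by auto
          ultimately show ?thesis using ph by simp
        next
          case gt
          have "grp q * T + s < grp p * T + r"
          proof -
            have "(grp q + 1) * T \<le> grp p * T" using gt by (intro mult_right_mono) auto
            then show ?thesis using pq(5) by (simp add: algebra_simps)
          qed
          then have "b < a" unfolding a_def b_def using mono pos_lt pq by auto
          then have "c {(q,b),(p,a)} = C (q,p)" using homuse am pq by blast
          moreover have "rc C M12 M34 p q = C (q,p)" using gt by (simp add: rc_def)
          moreover have "{(p,a),(q,b)} \<in> H_E m"
            using HE_mem[OF pq(1,2) am(1,2) pq(3)] grp_neq_match gt by auto
          ultimately show ?thesis using ph by (simp add: insert_commute)
        next
          case eq
          then have rs: "r = s" using pq(6) by simp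
          then have ab: "a = b" unfolding a_def b_def using eq by simp
          have cases: "(p=1 \<and> q=2) \<or> (p=2 \<and> q=1) \<or> (p=3 \<and> q=4) \<or> (p=4 \<and> q=3)"
            using grp_eq_cases[OF pq(1,2,3) eq] .
          have g01: "grp p \<le> 1" using cases by (auto simp: grp_def)
          have "grp p * T + r < 2 * T"
          proof -
            have "grp p * T \<le> 1 * T" using g01 by (intro mult_right_mono) auto
            then show ?thesis using pq(4) by linarith
          qed
          then have "a < xs ! (2*T)" unfolding a_def using mono T1 by auto
          moreover have "xs ! (2*T) \<in> H" using inH T1 by simp
          ultimately have hm: "c {(1,a),(2,a)} = M12 \<and> c {(3,a),(4,a)} = M34"
            using homuse[of a "xs ! (2*T)" 1 1] am by auto
          have "{(p,a),(q,b)} \<in> H_E m"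
            using HE_mem[OF pq(1,2) am(1,2) pq(3)] ab by auto
          moreover have "c {(p,a),(q,b)} = rc C M12 M34 p q"
            using cases hm ab by (auto simp: rc_def grp_def insert_commute)
          ultimately show ?thesis using ph by simp
        qed
      qed
      have F2: "inj_on phi ({1..5} \<times> {..<T})"
      proof (rule inj_onI)
        fix x y assume x: "x \<in> {1..5::nat} \<times> {..<T}" and y: "y \<in> {1..5::nat} \<times> {..<T}" and e: "phi x = phi y"
        obtain p r where pr: "x = (p,r)" by (cases x)
        obtain q s where qs: "y = (q,s)" by (cases y)
        have pq: "p = q" using e pr qs unfolding phi_def by simp
        have "xs ! (grp p * T + r) = xs ! (grp p * T + s)" using e pr qs pq unfolding phi_def by simp
        then have "grp p * T + r = grp p * T + s"
          using nth_eq_iff_index_eq[OF dxs] pos_lt x y pr qs len by (metis SigmaE lessThan_iff Pair_inject)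
        then show "x = y" using pr qs pq by simp
      qed
      have main: "has_copy (cycle_V n) (cycle_E n) (H_E m) (\<lambda>e. c e = col)"
        if w: "w \<in> set tris \<union> set pents" "cyc_col (rc C M12 M34) col w"
          and n: "n = 2*j + length w" "j < T" for w col n j
      proof (rule bounce[where phi=phi and T=T and R="rc C M12 M34" and w=w])
        show "\<And>p q r s. p \<in> {1..5} \<Longrightarrow> q \<in> {1..5} \<Longrightarrow> p \<noteq> q \<Longrightarrow> r < T \<Longrightarrow> s < T \<Longrightarrow>
          grp p \<noteq> grp q \<or> r = s \<Longrightarrow> {phi (p,r), phi (q,s)} \<in> H_E m \<and> c {phi (p,r), phi (q,s)} = rc C M12 M34 p q"
          using F1 by blast
        show "inj_on phi ({1..5} \<times> {..<T})" by (rule F2)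
        show "\<And>p q. rc C M12 M34 p q = rc C M12 M34 q p" by (rule rc_sym)
        show "distinct w" "set w \<subseteq> {1..5}" "length w \<ge> 2" "grp (w!0) \<noteq> grp (w!1)"
          using w(1) tris_ok pents_ok by fastforce+
        show "cyc_col (rc C M12 M34) col w" by (rule w(2))
        show "n = 2*j + length w" "j < T" by (rule n)+
      qed
      have red: "has_copy (cycle_V k) (cycle_E k) (H_E m) c" if "w \<in> set tris" "cyc_col (rc C M12 M34) True w" for w
      proof -
        have "k = 2 * ((k-3) div 2) + length w" using tris_ok[OF that(1)] assms(1,2) by (auto elim!: oddE)
        moreover have "(k-3) div 2 < T" unfolding T_def using div_le_dividend[of "k-3" 2] assms by linarith
        ultimately have "has_copy (cycle_V k) (cycle_E k) (H_E m) (\<lambda>e. c e = True)"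
          using main[of w True k "(k-3) div 2"] that by blast
        then show ?thesis by simp
      qed
      have blue: "has_copy (cycle_V l) (cycle_E l) (H_E m) (\<lambda>e. \<not> c e)"
        if "w \<in> set tris \<union> set pents" "cyc_col (rc C M12 M34) False w" for w
      proof -
        have "length w = 3 \<or> length w = 5" using that(1) tris_ok pents_ok by blast
        then have "l = 2 * ((l - length w) div 2) + length w" using assms(3,4) by (auto elim!: oddE)
        moreover have "(l - length w) div 2 < T" unfolding T_def using div_le_dividend[of "l - length w" 2] assms by linarith
        ultimately have "has_copy (cycle_V l) (cycle_E l) (H_E m) (\<lambda>e. c e = False)"
          using main[of w False l "(l - length w) div 2"] that by blast
        then show ?thesis by simp
      qed
      show "has_copy (cycle_V k) (cycle_E k) (H_E m) c \<or> has_copy (cycle_V l) (cycle_E l) (H_E m) (\<lambda>e. \<not> c e)"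
        using finite_case[of C M12 M34] red blue by blast
    qed
  qed
qed

end
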